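(* Let $q\ge1$ and $t$ be integers with $0\le t<q$, and let $\mathcal{C}_{q,t}^{\mathrm{det}}=\bigcup_{i=0}^{\lfloor (q-1)/(t+1)\rfloor}\mathcal{S}_{q-i(t+1)}^q.$ Then $\mathcal{C}_{q,t}^{\mathrm{det}}$ is a $t$-tail-deletion-detecting code, and it is optimal, i.e. $\mathsf{DEL}_{\mathrm{det}}(q,t)=|\mathcal{C}_{q,t}^{\mathrm{det}}|=\sum_{i=0}^{\lfloor (q-1)/(t+1)\rfloor}|\mathcal{S}_{q-i(t+1)}^q|=q!\sum_{i=0}^{\lfloor (q-1)/(t+1)\rfloor}\frac{1}{(i(t+1))!}.$
   Context: Let $[q]=\{0,1,\dots,q-1\}$. For $1\le m\le q$, a partial permutation of length $m$ over $[q]$ is a sequence $\pi=(\pi_1,\dots,\pi_m)$ of $m$ pairwise distinct elements of $[q]$. Let $\mathcal{S}_m^q$ be the set of those of length $m$ and $\mathcal{S}_{\mathrm{all}}^q=\bigcup_{m=1}^{q}\mathcal{S}_m^q$. A code is any subset of $\mathcal{S}_{\mathrm{all}}^q$. For $\pi$ of length $m$ and integer $j\ge 0$, $\pi_{\downarrow j}=(\pi_{k+1},\dots,\pi_m)$ with $k=\min(j,m-1)$ (leftmost symbols are deleted; the last symbol is never deleted); $\mathcal{B}_{\mathrm{del}}^t(\pi)=\{\pi_{\downarrow j}:0\le j\le t\}$. A code $\mathcal{C}$ is $t$-tail-deletion-detecting if $\mathcal{C}\cap\mathcal{B}_{\mathrm{del}}^t(\pi)=\{\pi\}$ for every $\pi\in\mathcal{C}$.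 $\mathsf{DEL}_{\mathrm{det}}(q,t)$ denotes the maximum size of a $t$-tail-deletion-detecting code in $\mathcal{S}_{\mathrm{all}}^q$. *)

theory Defs
  imports Complex_Main
begin

text \<open>Partial permutations over [q] = {0..<q} are represented as lists of
pairwise distinct naturals below q.\<close>

definition S :: "nat \<Rightarrow> nat \<Rightarrow> nat list set" where
  "S q m = {\<pi>. length \<pi> = m \<and> distinct \<pi> \<and> set \<pi> \<subseteq> {0..<q}}"

definition S_all :: "nat \<Rightarrow> nat list set" where
  "S_all q = (\<Union>m\<in>{1..q}. S q m)"

definition tail_del :: "nat list \<Rightarrow> nat \<Rightarrow> nat list" where
  "tail_del \<pi> j = drop (min j (length \<pi> - 1)) \<pi>"

definition B_del :: "nat \<Rightarrow> nat list \<Rightarrow> nat list set" where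
  "B_del t \<pi> = {tail_del \<pi> j | j. j \<le> t}"

definition is_code :: "nat \<Rightarrow> nat list set \<Rightarrow> bool" where
  "is_code q C \<longleftrightarrow> C \<subseteq> S_all q"

definition tail_del_detecting :: "nat \<Rightarrow> nat list set \<Rightarrow> bool" where
  "tail_del_detecting t C \<longleftrightarrow> (\<forall>\<pi>\<in>C. C \<inter> B_del t \<pi> = {\<pi>})"

definition DEL_det :: "nat \<Rightarrow> nat \<Rightarrow> nat" where
  "DEL_det q t = Max {card C | C. is_code q C \<and> tail_del_detecting t C}"

definition C_det :: "nat \<Rightarrow> nat \<Rightarrow> nat list set" where
  "C_det q t = (\<Union>i\<in>{0..(q - 1) div (t + 1)}. S q (q - i * (t + 1)))"

end

theory Submission
  imports Defs
begin

lemma S_all_iff: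
  "\<pi> \<in> S_all q \<longleftrightarrow> 1 \<le> length \<pi> \<and> length \<pi> \<le> q \<and> distinct \<pi> \<and> set \<pi> \<subseteq> {0..<q}"
  unfolding S_all_def S_def by auto

lemma C_det_iff:
  assumes q1: "1 \<le> q"
  shows "\<pi> \<in> C_det q t \<longleftrightarrow> \<pi> \<in> S_all q \<and> (t + 1) dvd (q - length \<pi>)"
proof
  assume "\<pi> \<in> C_det q t"
  then obtain i where i: "i \<le> (q - 1) div (t + 1)" and p: "\<pi> \<in> S q (q - i * (t + 1))"
    unfolding C_det_def by auto
  have "i * (t + 1) \<le> ((q - 1) div (t + 1)) * (t + 1)" using i by (rule mult_le_mono1)
  also have "\<dots> \<le> q - 1" by (rule div_times_less_eq_dividend)
  finally have le: "i * (t + 1) \<le> q - 1" .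
  have len: "length \<pi> = q - i * (t + 1)" using p unfolding S_def by auto
  have "1 \<le> length \<pi>" using le len q1 by linarith
  moreover have "q - length \<pi> = i * (t + 1)" using len le by auto
  moreover have "(t+1) dvd (i * (t + 1))" by (rule dvd_triv_right)
  ultimately show "\<pi> \<in> S_all q \<and> (t + 1) dvd (q - length \<pi>)"
    using p len le unfolding S_def S_all_iff by auto
next
  assume a: "\<pi> \<in> S_all q \<and> (t + 1) dvd (q - length \<pi>)"
  then obtain i where i: "q - length \<pi> = (t + 1) * i" by (auto elim: dvdE)
  have l: "1 \<le> length \<pi>" "length \<pi> \<le> q" using a S_all_iff by auto
  have "i * (t + 1) \<le> q - 1" using i l by (simp add: mult.commute)
  then have "i \<le> (q - 1) div (t + 1)"
    by (simp add: less_eq_div_iff_mult_less_eq)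
  moreover have "length \<pi> = q - i * (t + 1)" using i l by (simp add: mult.commute)
  ultimately show "\<pi> \<in> C_det q t"
    using a unfolding C_det_def S_def S_all_iff by auto
qed

lemma finite_S: "finite (S q m)"
proof -
  have "S q m \<subseteq> {xs. set xs \<subseteq> {0..<q} \<and> length xs = m}" unfolding S_def by auto
  then show ?thesis using finite_lists_length_eq[of "{0..<q}" m] finite_subset by blast
qed

lemma finite_S_all: "finite (S_all q)"
  unfolding S_all_def using finite_S by auto

lemma finite_C_det: "finite (C_det q t)"
  unfolding C_det_def using finite_S by auto

lemma C_det_code: assumes q1: "1 \<le> q" shows "is_code q (C_det q t)"
  unfolding is_code_def using C_det_iff[OF q1] by blast

lemma C_det_detect: assumes q1: "1 \<le> q" shows "tail_del_detecting t (C_det q t)"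
  unfolding tail_del_detecting_def
proof (intro ballI equalityI subsetI)
  fix \<pi> x assume p: "\<pi> \<in> C_det q t" and x: "x \<in> C_det q t \<inter> B_del t \<pi>"
  then obtain j where j: "j \<le> t" "x = tail_del \<pi> j" unfolding B_del_def by auto
  define k where "k = min j (length \<pi> - 1)"
  have xk: "x = drop k \<pi>" using j k_def tail_del_def by simp
  have l: "1 \<le> length \<pi>" "length \<pi> \<le> q" using p C_det_iff[OF q1] S_all_iff by auto
  show "x \<in> {\<pi>}"
  proof (cases "k = 0")
    case True then show ?thesis using xk by simp
  next
    case False
    have lx: "length x = length \<pi> - k" using xk by simp
    have k1: "k \<le> length \<pi> - 1" "k \<le> t" using k_def j by auto
    have d1: "(t+1) dvd (q - length \<pi>)" using p C_det_iff[OF q1] by auto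
    have d3: "(t+1) dvd (q - length x)" using x C_det_iff[OF q1] by blast
    have "q - length x = q - length \<pi> + k" using lx k1 l by linarith
    then have d2: "(t+1) dvd (q - length \<pi> + k)" using d3 by simp
    have "(t+1) dvd k" using d1 d2 by (simp add: dvd_add_right_iff)
    then have "t + 1 \<le> k" using False by (simp add: dvd_imp_le)
    then show ?thesis using k1 by simp
  qed
next
  fix \<pi> x assume "\<pi> \<in> C_det q t" "x \<in> {\<pi>}"
  moreover have "\<pi> \<in> B_del t \<pi>" unfolding B_del_def tail_del_def
    by (rule CollectI, rule exI[of _ 0]) simp
  ultimately show "x \<in> C_det q t \<inter> B_del t \<pi>" by simp
qed

definition fill :: "nat \<Rightarrow> nat \<Rightarrow> nat list \<Rightarrow> nat list" where
  "fill q t \<pi> = take ((q - length \<pi>) mod (t + 1)) (filter (\<lambda>x. x \<notin> set \<pi>) [0..<q]) @ \<pi>"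

lemma fill_props:
  assumes q1: "1 \<le> q" and p: "\<pi> \<in> S_all q"
  shows "fill q t \<pi> \<in> C_det q t"
    "drop ((q - length \<pi>) mod (t + 1)) (fill q t \<pi>) = \<pi>"
    "length (fill q t \<pi>) = length \<pi> + (q - length \<pi>) mod (t + 1)"
proof -
  define d where "d = (q - length \<pi>) mod (t + 1)"
  define r where "r = filter (\<lambda>x. x \<notin> set \<pi>) [0..<q]"
  have l: "1 \<le> length \<pi>" "length \<pi> \<le> q" "distinct \<pi>" "set \<pi> \<subseteq> {0..<q}"
    using p S_all_iff by auto
  have sr: "set r = {0..<q} - set \<pi>" unfolding r_def by auto
  have dr: "distinct r" unfolding r_def by simp
  have "length r = card ({0..<q} - set \<pi>)" using distinct_card[OF dr] sr by simp
  also have "\<dots> = q - length \<pi>" using l by (simp add: card_Diff_subset distinct_card)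
  finally have lr: "length r = q - length \<pi>" .
  have dle: "d \<le> q - length \<pi>" unfolding d_def by simp
  have f: "fill q t \<pi> = take d r @ \<pi>" unfolding fill_def d_def r_def by simp
  have lf: "length (fill q t \<pi>) = length \<pi> + d" using f lr dle by simp
  then show "length (fill q t \<pi>) = length \<pi> + (q - length \<pi>) mod (t + 1)" using d_def by simp
  show "drop ((q - length \<pi>) mod (t + 1)) (fill q t \<pi>) = \<pi>"
    using f lr dle d_def by simp
  have dist: "distinct (fill q t \<pi>)" using f dr l sr
    by (auto dest: in_set_takeD intro: distinct_take)
  have st: "set (fill q t \<pi>) \<subseteq> {0..<q}" using f sr l by (auto dest: in_set_takeD)
  have "q - length \<pi> - d = (t + 1) * ((q - length \<pi>) div (t + 1))" unfolding d_def
    by (rule minus_mod_eq_mult_div)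
  then have "(t + 1) dvd (q - length \<pi> - d)" by (metis dvd_triv_left)
  moreover have "q - length \<pi> - d = q - length (fill q t \<pi>)" using lf by simp
  ultimately show "fill q t \<pi> \<in> C_det q t"
    using C_det_iff[OF q1] S_all_iff lf dle dist st l by auto
qed

lemma fill_inj_aux:
  assumes q1: "1 \<le> q" and C: "is_code q C" "tail_del_detecting t C"
    and p: "\<pi> \<in> C" "\<pi>' \<in> C" and eq: "fill q t \<pi> = fill q t \<pi>'"
    and le: "length \<pi> \<le> length \<pi>'"
  shows "\<pi> = \<pi>'"
proof -
  have ps: "\<pi> \<in> S_all q" "\<pi>' \<in> S_all q" using C p is_code_def by auto
  define d where "d = (q - length \<pi>) mod (t + 1)"
  define d' where "d' = (q - length \<pi>') mod (t + 1)"
  note f1 = fill_props[OF q1 ps(1), of t, folded d_def]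
  note f2 = fill_props[OF q1 ps(2), of t, folded d'_def]
  have len: "length \<pi> + d = length \<pi>' + d'" using f1(3) f2(3) eq by simp
  have dt: "d \<le> t" unfolding d_def by (metis Suc_eq_plus1 less_Suc_eq_le mod_less_divisor zero_less_Suc)
  have l1: "1 \<le> length \<pi>" using ps S_all_iff by auto
  have "\<pi> = drop d (fill q t \<pi>')" using f1(2) eq by simp
  also have "\<dots> = drop (d - d') (drop d' (fill q t \<pi>'))" using len le by simp
  also have "\<dots> = drop (d - d') \<pi>'" using f2(2) by simp
  finally have pe: "\<pi> = drop (d - d') \<pi>'" .
  have "d - d' \<le> length \<pi>' - 1" using len le l1 by linarith
  then have "\<pi> = tail_del \<pi>' (d - d')" using pe tail_del_def by (simp add: min_absorb1)
  moreover have "d - d' \<le> t" using dt by simp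
  ultimately have "\<pi> \<in> B_del t \<pi>'" unfolding B_del_def by blast
  then have "\<pi> \<in> C \<inter> B_del t \<pi>'" using p by simp
  then show ?thesis using C(2) p unfolding tail_del_detecting_def by blast
qed

lemma code_bound:
  assumes q1: "1 \<le> q" and C: "is_code q C" "tail_del_detecting t C"
  shows "card C \<le> card (C_det q t)"
proof (rule card_inj_on_le[of "fill q t"])
  show "inj_on (fill q t) C"
  proof (rule inj_onI)
    fix x y assume "x \<in> C" "y \<in> C" "fill q t x = fill q t y"
    then show "x = y" using fill_inj_aux[OF q1 C] by (metis nat_le_linear)
  qed
  show "fill q t ` C \<subseteq> C_det q t" using C fill_props[OF q1] is_code_def by blast
  show "finite (C_det q t)" by (rule finite_C_det)
qed

lemma card_S: assumes "m \<le> q" shows "card (S q m) = \<Prod>{Suc (q - m)..q}"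
proof -
  have "S q m = {xs. length xs = m \<and> distinct xs \<and> set xs \<subseteq> {0..<q}}" unfolding S_def by simp
  then show ?thesis using card_lists_distinct_length_eq[of "{0..<q}" m] assms by simp
qed

lemma real_card_S: assumes "m \<le> q" shows "real (card (S q m)) = fact q / fact (q - m)"
proof -
  have "(fact q :: nat) = fact (q - m) * \<Prod>{Suc (q - m)..q}"
    by (rule fact_eq_fact_times) simp
  then have "(fact q :: real) = fact (q - m) * real (\<Prod>{Suc (q - m)..q})"
    by (metis of_nat_fact of_nat_mult)
  then show ?thesis using card_S[OF assms] by (simp add: field_simps)
qed

theorem mainTheorem8:
  fixes q t :: nat
  assumes "q \<ge> 1" and "t < q"
  shows "is_code q (C_det q t) \<and> tail_del_detecting t (C_det q t)
    \<and> DEL_det q t = card (C_det q t)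
    \<and> card (C_det q t) = (\<Sum>i = 0..(q - 1) div (t + 1). card (S q (q - i * (t + 1))))
    \<and> real (card (C_det q t)) = fact q * (\<Sum>i = 0..(q - 1) div (t + 1). 1 / fact (i * (t + 1)))"
proof -
  let ?K = "{card C | C. is_code q C \<and> tail_del_detecting t C}"
  have mem: "card (C_det q t) \<in> ?K" using C_det_code[OF assms(1)] C_det_detect[OF assms(1)] by blast
  have ub: "\<forall>y\<in>?K. y \<le> card (C_det q t)" using code_bound[OF assms(1)] by blast
  have fin: "finite ?K" using ub by (metis (no_types, lifting) finite_atMost atMost_iff finite_subset subsetI)
  have del: "DEL_det q t = card (C_det q t)" unfolding DEL_det_def
    using Max_eqI[OF fin] ub mem by blast
  have bnd: "i * (t + 1) \<le> q - 1" if "i \<in> {0..(q - 1) div (t + 1)}" for i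
  proof -
    have "i * (t + 1) \<le> ((q - 1) div (t + 1)) * (t + 1)" using that by (intro mult_le_mono1) simp
    also have "\<dots> \<le> q - 1" by (rule div_times_less_eq_dividend)
    finally show ?thesis .
  qed
  have cs: "card (C_det q t) = (\<Sum>i = 0..(q - 1) div (t + 1). card (S q (q - i * (t + 1))))"
    unfolding C_det_def
  proof (rule card_UN_disjoint)
    show "finite {0..(q - 1) div (t + 1)}" by simp
    show "\<forall>i\<in>{0..(q - 1) div (t + 1)}. finite (S q (q - i * (t + 1)))" using finite_S by blast
    show "\<forall>i\<in>{0..(q - 1) div (t + 1)}. \<forall>j\<in>{0..(q - 1) div (t + 1)}. i \<noteq> j \<longrightarrow>
        S q (q - i * (t + 1)) \<inter> S q (q - j * (t + 1)) = {}"
    proof (intro ballI impI)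
      fix i j assume i: "i \<in> {0..(q - 1) div (t + 1)}" and j: "j \<in> {0..(q - 1) div (t + 1)}" and ne: "i \<noteq> j"
      have "i * (t + 1) \<noteq> j * (t + 1)" using ne by (metis mult_right_cancel add_gr_0 zero_less_one less_irrefl)
      then have "q - i * (t + 1) \<noteq> q - j * (t + 1)" using bnd[OF i] bnd[OF j] by linarith
      then show "S q (q - i * (t + 1)) \<inter> S q (q - j * (t + 1)) = {}" unfolding S_def by auto
    qed
  qed
  have "real (card (C_det q t)) = (\<Sum>i = 0..(q - 1) div (t + 1). real (card (S q (q - i * (t + 1)))))"
    using cs by simp
  also have "\<dots> = (\<Sum>i = 0..(q - 1) div (t + 1). fact q * (1 / fact (i * (t + 1))))"
  proof (rule sum.cong)
    fix i assume i: "i \<in> {0..(q - 1) div (t + 1)}"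
    have "q - (q - i * (t + 1)) = i * (t + 1)" using bnd[OF i] by simp
    then show "real (card (S q (q - i * (t + 1)))) = fact q * (1 / fact (i * (t + 1)))"
      using real_card_S[of "q - i * (t + 1)" q] by simp
  qed simp
  also have "\<dots> = fact q * (\<Sum>i = 0..(q - 1) div (t + 1). 1 / fact (i * (t + 1)))"
    by (simp add: sum_distrib_left)
  finally show ?thesis using C_det_code[OF assms(1)] C_det_detect[OF assms(1)] del cs by blast
qed

end
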